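(* Let $f_\Theta$ be a prior probability density on $\mathbb{R}$ with finite mean $\theta_0=\int\theta f_\Theta(\theta)d\theta$. Let $l_\epsilon,l_1,\dots,l_k$ be probability densities on $\mathbb{R}$, $\Delta_1,\dots,\Delta_k\in\mathbb{R}$, and weights $\phi_\epsilon,\phi_1,\dots,\phi_k\in[0,1]$ with $\phi_\epsilon+\sum_{i=1}^k\phi_i=1$ and $\phi_\epsilon>0$. Consider the mixture signal likelihood $$l_{X|\Theta}(x\mid\theta)=\phi_\epsilon\,l_\epsilon(x-\theta)+\sum_{i=1}^k\phi_i\,l_i(x-\Delta_i).$$ Fix $x$ with $J_0(x)=\int f_\Theta(\theta)l_\epsilon(x-\theta)d\theta\in(0,\infty)$ and $\int|\theta| f_\Theta(\theta)l_\epsilon(x-\theta)d\theta<\infty$. Let $\theta_1=\frac{\int\theta f_\Theta(\theta)l_{X|\Theta}(x\mid\theta)d\theta}{\int f_\Theta(\theta)l_{X|\Theta}(x\mid\theta)d\theta}$ be the posterior mean and $\theta_1^{nm}=\frac{\int\theta f_\Theta(\theta)l_\epsilon(x-\theta)d\theta}{J_0(x)}$ the posterior mean under the non-mixture signal with likelihood $l_\epsilon(x-\theta)$. Then $$\theta_1=\alpha(x)\,\theta_1^{nm}+(1-\alpha(x))\,\theta_0,\qquad \alpha(x)=\Bigl(1+\sum_{i=1}^k\frac{\phi_i}{\phi_\epsilon}\frac{l_i(x-\Delta_i)}{J_0(x)}\Bigr)^{-1}\in[0,1].$$ *)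

theory Defs
  imports "HOL-Analysis.Analysis"
begin

definition prob_density :: "(real \<Rightarrow> real) \<Rightarrow> bool" where
  "prob_density g \<longleftrightarrow> g \<in> borel_measurable borel \<and> (\<forall>x. 0 \<le> g x) \<and>
     (\<integral>\<^sup>+ x. ennreal (g x) \<partial>lborel) = 1"

definition mixture_lik ::
  "nat \<Rightarrow> real \<Rightarrow> (real \<Rightarrow> real) \<Rightarrow> (nat \<Rightarrow> real) \<Rightarrow> (nat \<Rightarrow> real \<Rightarrow> real) \<Rightarrow> (nat \<Rightarrow> real)
    \<Rightarrow> real \<Rightarrow> real \<Rightarrow> real" where
  "mixture_lik k phi_e l_e phi l Delta x \<theta> =
     phi_e * l_e (x - \<theta>) + (\<Sum>i=1..k. phi i * l i (x - Delta i))"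

end

theory Submission
  imports Defs
begin

theorem mainTheorem9:
  fixes f l_e :: "real \<Rightarrow> real" and l :: "nat \<Rightarrow> real \<Rightarrow> real"
    and Delta phi :: "nat \<Rightarrow> real" and phi_e x :: real and k :: nat
  assumes prior: "prob_density f"
    and mean: "integrable lborel (\<lambda>\<theta>. \<theta> * f \<theta>)"
    and le_dens: "prob_density l_e"
    and l_dens: "\<And>i. i \<in> {1..k} \<Longrightarrow> prob_density (l i)"
    and phi_e_range: "0 \<le> phi_e" "phi_e \<le> 1"
    and phi_range: "\<And>i. i \<in> {1..k} \<Longrightarrow> 0 \<le> phi i \<and> phi i \<le> 1"
    and phi_sum: "phi_e + (\<Sum>i=1..k. phi i) = 1"
    and phi_e_pos: "phi_e > 0"
    and J0_pos: "(\<integral>\<^sup>+ \<theta>. ennreal (f \<theta> * l_e (x - \<theta>)) \<partial>lborel) > 0"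
    and J0_fin: "(\<integral>\<^sup>+ \<theta>. ennreal (f \<theta> * l_e (x - \<theta>)) \<partial>lborel) < \<infinity>"
    and abs_fin: "(\<integral>\<^sup>+ \<theta>. ennreal (\<bar>\<theta>\<bar> * f \<theta> * l_e (x - \<theta>)) \<partial>lborel) < \<infinity>"
  defines "\<theta>0 \<equiv> (\<integral>\<theta>. \<theta> * f \<theta> \<partial>lborel)"
    and "\<theta>1 \<equiv> (\<integral>\<theta>. \<theta> * f \<theta> * mixture_lik k phi_e l_e phi l Delta x \<theta> \<partial>lborel)
              / (\<integral>\<theta>. f \<theta> * mixture_lik k phi_e l_e phi l Delta x \<theta> \<partial>lborel)"
    and "\<theta>1nm \<equiv> (\<integral>\<theta>. \<theta> * f \<theta> * l_e (x - \<theta>) \<partial>lborel) / (\<integral>\<theta>. f \<theta> * l_e (x - \<theta>) \<partial>lborel)"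
    and "\<alpha> \<equiv> inverse (1 + (\<Sum>i=1..k. (phi i / phi_e) * (l i (x - Delta i) / (\<integral>\<theta>. f \<theta> * l_e (x - \<theta>) \<partial>lborel))))"
  shows "\<theta>1 = \<alpha> * \<theta>1nm + (1 - \<alpha>) * \<theta>0 \<and> 0 \<le> \<alpha> \<and> \<alpha> \<le> 1"
proof -
  have fm: "f \<in> borel_measurable borel" and f0: "\<And>t. 0 \<le> f t" and f1: "(\<integral>\<^sup>+ t. ennreal (f t) \<partial>lborel) = 1"
    using prior unfolding prob_density_def by auto
  have lm: "l_e \<in> borel_measurable borel" and l0: "\<And>t. 0 \<le> l_e t"
    using le_dens unfolding prob_density_def by auto
  have lxm: "(\<lambda>t. l_e (x - t)) \<in> borel_measurable borel"
    using measurable_compose[OF _ lm, of "\<lambda>t. x - t" borel] by simp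
  have fint: "integrable lborel f"
    by (rule integrableI_bounded) (use fm f0 f1 in auto)
  have f_int1: "(\<integral>t. f t \<partial>lborel) = 1"
    using integral_eq_nn_integral[of f lborel] fm f0 f1 by simp
  define J where "J = (\<integral>\<theta>. f \<theta> * l_e (x - \<theta>) \<partial>lborel)"
  define A where "A = (\<integral>\<theta>. \<theta> * f \<theta> * l_e (x - \<theta>) \<partial>lborel)"
  define C where "C = (\<Sum>i=1..k. phi i * l i (x - Delta i))"
  have Jm: "(\<lambda>t. f t * l_e (x - t)) \<in> borel_measurable lborel" using fm lxm by simp
  have Jint: "integrable lborel (\<lambda>t. f t * l_e (x - t))"
    by (rule integrableI_bounded) (use Jm J0_fin f0 l0 in auto)
  have Aint: "integrable lborel (\<lambda>t. t * f t * l_e (x - t))"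
  proof (rule integrableI_bounded)
    show "(\<lambda>t. t * f t * l_e (x - t)) \<in> borel_measurable lborel" using fm lxm by simp
    have "\<And>t. norm (t * f t * l_e (x - t)) = \<bar>t\<bar> * f t * l_e (x - t)"
      using f0 l0 by (simp add: abs_mult)
    then show "(\<integral>\<^sup>+ t. ennreal (norm (t * f t * l_e (x - t))) \<partial>lborel) < \<infinity>"
      using abs_fin by simp
  qed
  have Jeq: "J = enn2real (\<integral>\<^sup>+ \<theta>. ennreal (f \<theta> * l_e (x - \<theta>)) \<partial>lborel)"
    unfolding J_def using integral_eq_nn_integral[OF Jm] f0 l0 by simp
  have Jpos: "J > 0" unfolding Jeq using J0_pos J0_fin
    by (simp add: enn2real_positive_iff)
  have C0: "C \<ge> 0" unfolding C_def
    using phi_range l_dens unfolding prob_density_def by (intro sum_nonneg) auto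
  have mix: "\<And>t. mixture_lik k phi_e l_e phi l Delta x t = phi_e * l_e (x - t) + C"
    unfolding mixture_lik_def C_def by simp
  have N: "(\<integral>\<theta>. \<theta> * f \<theta> * mixture_lik k phi_e l_e phi l Delta x \<theta> \<partial>lborel) = phi_e * A + C * \<theta>0"
  proof -
    have "(\<integral>\<theta>. \<theta> * f \<theta> * mixture_lik k phi_e l_e phi l Delta x \<theta> \<partial>lborel)
       = (\<integral>\<theta>. phi_e * (\<theta> * f \<theta> * l_e (x - \<theta>)) + C * (\<theta> * f \<theta>) \<partial>lborel)"
      by (simp add: mix algebra_simps)
    also have "\<dots> = phi_e * A + C * \<theta>0"
      using Aint mean unfolding A_def \<theta>0_def by simp
    finally show ?thesis .
  qed
  have D: "(\<integral>\<theta>. f \<theta> * mixture_lik k phi_e l_e phi l Delta x \<theta> \<partial>lborel) = phi_e * J + C"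
  proof -
    have "(\<integral>\<theta>. f \<theta> * mixture_lik k phi_e l_e phi l Delta x \<theta> \<partial>lborel)
       = (\<integral>\<theta>. phi_e * (f \<theta> * l_e (x - \<theta>)) + C * f \<theta> \<partial>lborel)"
      by (simp add: mix algebra_simps)
    also have "\<dots> = phi_e * J + C"
      using Jint fint f_int1 unfolding J_def by simp
    finally show ?thesis .
  qed
  have sumeq: "(\<Sum>i=1..k. (phi i / phi_e) * (l i (x - Delta i) / J)) = C / (phi_e * J)"
    unfolding C_def by (simp add: sum_divide_distrib)
  have aeq: "\<alpha> = phi_e * J / (phi_e * J + C)"
    unfolding \<alpha>_def J_def[symmetric] sumeq using Jpos phi_e_pos C0
    by (simp add: field_simps inverse_eq_divide)
  have pJ: "phi_e * J > 0" using Jpos phi_e_pos by simp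
    have E: "phi_e * J + C \<noteq> 0" using pJ C0 by linarith
    have a1: "phi_e * J / (phi_e * J + C) * (A / J) = phi_e * A / (phi_e * J + C)"
      using Jpos by (simp add: field_simps)
    have a2: "1 - phi_e * J / (phi_e * J + C) = C / (phi_e * J + C)"
      using E by (simp add: field_simps)
    show ?thesis unfolding \<theta>1_def N D \<theta>1nm_def J_def[symmetric] A_def[symmetric] aeq a1 a2
      using pJ C0 E by (simp add: add_divide_distrib)
qed

end
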